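(* Let $C(\cdot,t)$, $t\in[0,T)$, be a smooth family of closed curves in $\mathbb{R}^2$ with centro-affine arc-length $\xi$ and centro-affine curvature $\varphi$, and suppose $\varphi$ satisfies $$\frac{\partial\varphi}{\partial t}=\frac12\varphi_{\xi\xi}-\frac12\varphi^3+2\varphi$$ for $t\in[0,T)$. Then $\varphi$ is bounded on $[0,T)$; more precisely, $$\min\{-2,\varphi_{\min}(0)\}\le\varphi(p,t)\le\max\{2,\varphi_{\max}(0)\},$$ where $\varphi_{\max}(t)=\sup_p\varphi(p,t)$ and $\varphi_{\min}(t)=\inf_p\varphi(p,t)$.
   Context: For $u,v\in\mathbb{R}^2$, $[u,v]$ denotes the determinant of the matrix with columns $u,v$. Each curve $C(\cdot,t):S^1\to\mathbb{R}^2$ is smooth, closed, with $[C,C_p]\neq0$, $[C_p,C_{pp}]\neq0$ (then $[C_p,C_{pp}]/[C,C_p]>0$). The centro-affine metric is $g=\sqrt{[C_p,C_{pp}]/[C,C_p]}$, centro-affine arc-length $\xi(p)=\int_{p_0}^p g\,dp$ (so $\partial_\xi=g^{-1}\partial_p$), and centro-affine curvature $\varphi=[C_{\xi\xi},C]/[C_\xi,C]$. *)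

theory Defs
  imports "HOL-Analysis.Analysis"
begin

text \<open>A family of planar curves is given by its component functions
  x, y :: real \<Rightarrow> real \<Rightarrow> real, evaluated as x p t, y p t
  (p = curve parameter, t = time). Closedness: period 1 in p (S^1 = R/Z).\<close>

text \<open>Smoothness on R \<times> I: all iterated partial derivatives (in p, and in t
  one-sidedly within I) exist and are continuous, i.e. C-infinity.\<close>
coinductive smooth_fam :: "real set \<Rightarrow> (real \<Rightarrow> real \<Rightarrow> real) \<Rightarrow> bool" for I where
  "\<lbrakk> continuous_on (UNIV \<times> I) (\<lambda>(p,t). f p t);
     \<forall>p t. t \<in> I \<longrightarrow> ((\<lambda>q. f q t) has_real_derivative fp p t) (at p);
     \<forall>p t. t \<in> I \<longrightarrow> ((\<lambda>s. f p s) has_real_derivative ft p t) (at t within I);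
     smooth_fam I fp; smooth_fam I ft \<rbrakk> \<Longrightarrow> smooth_fam I f"

definition dp :: "(real \<Rightarrow> real \<Rightarrow> real) \<Rightarrow> real \<Rightarrow> real \<Rightarrow> real" where
  "dp f p t = deriv (\<lambda>q. f q t) p"

definition dt :: "real \<Rightarrow> (real \<Rightarrow> real \<Rightarrow> real) \<Rightarrow> real \<Rightarrow> real \<Rightarrow> real" where
  "dt T f p t = vector_derivative (\<lambda>s. f p s) (at t within {0..<T})"

definition det2 :: "real \<Rightarrow> real \<Rightarrow> real \<Rightarrow> real \<Rightarrow> real" where
  "det2 u1 u2 v1 v2 = u1 * v2 - u2 * v1"

definition ca_metric :: "(real \<Rightarrow> real \<Rightarrow> real) \<Rightarrow> (real \<Rightarrow> real \<Rightarrow> real) \<Rightarrow> real \<Rightarrow> real \<Rightarrow> real" where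
  "ca_metric x y p t =
     sqrt (det2 (dp x p t) (dp y p t) (dp (dp x) p t) (dp (dp y) p t)
           / det2 (x p t) (y p t) (dp x p t) (dp y p t))"

definition dxi :: "(real \<Rightarrow> real \<Rightarrow> real) \<Rightarrow> (real \<Rightarrow> real \<Rightarrow> real) \<Rightarrow> (real \<Rightarrow> real \<Rightarrow> real) \<Rightarrow> real \<Rightarrow> real \<Rightarrow> real" where
  "dxi x y f p t = dp f p t / ca_metric x y p t"

definition ca_curv :: "(real \<Rightarrow> real \<Rightarrow> real) \<Rightarrow> (real \<Rightarrow> real \<Rightarrow> real) \<Rightarrow> real \<Rightarrow> real \<Rightarrow> real" where
  "ca_curv x y p t =
     det2 (dxi x y (dxi x y x) p t) (dxi x y (dxi x y y) p t) (x p t) (y p t)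
     / det2 (dxi x y x p t) (dxi x y y p t) (x p t) (y p t)"

end

theory Submission
  imports Defs
begin

inductive sm_alg :: "real set \<Rightarrow> (real \<Rightarrow> real \<Rightarrow> real) \<Rightarrow> bool" for I where
  base: "smooth_fam I f \<Longrightarrow> sm_alg I f"
| const: "sm_alg I (\<lambda>p t. c)"
| add: "sm_alg I f \<Longrightarrow> sm_alg I g \<Longrightarrow> sm_alg I (\<lambda>p t. f p t + g p t)"
| mult: "sm_alg I f \<Longrightarrow> sm_alg I g \<Longrightarrow> sm_alg I (\<lambda>p t. f p t * g p t)"
| inv: "sm_alg I f \<Longrightarrow> (\<forall>p t. t \<in> I \<longrightarrow> f p t \<noteq> 0) \<Longrightarrow> sm_alg I (\<lambda>p t. inverse (f p t))"
| sqr: "sm_alg I f \<Longrightarrow> (\<forall>p t. t \<in> I \<longrightarrow> f p t \<noteq> 0) \<Longrightarrow> sm_alg I (\<lambda>p t. sqrt (f p t))"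
| sg: "sm_alg I f \<Longrightarrow> (\<forall>p t. t \<in> I \<longrightarrow> f p t \<noteq> 0) \<Longrightarrow> sm_alg I (\<lambda>p t. sgn (f p t))"

lemma sgn_deriv0:
  fixes h :: "real \<Rightarrow> real"
  assumes "continuous (at a within S) h" "h a \<noteq> 0" "a \<in> S"
  shows "((\<lambda>x. sgn (h x)) has_real_derivative 0) (at a within S)"
proof -
  have pos: "\<bar>h a\<bar> > 0" using assms(2) by simp
  have "\<forall>e>0. \<exists>d>0. \<forall>x'\<in>S. dist x' a < d \<longrightarrow> dist (h x') (h a) < e"
    using assms(1) unfolding continuous_within_eps_delta .
  from this[rule_format, OF pos] obtain d where d: "d > 0" "\<forall>x'\<in>S. dist x' a < d \<longrightarrow> dist (h x') (h a) < \<bar>h a\<bar>"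
    by auto
  have "((\<lambda>x. sgn (h a)) has_real_derivative 0) (at a within S)" by simp
  then show ?thesis
  proof (rule has_field_derivative_transform_within[OF _ d(1) assms(3)])
    fix x assume "x \<in> S" "dist x a < d"
    then have "dist (h x) (h a) < \<bar>h a\<bar>" using d by auto
    then show "sgn (h a) = sgn (h x)"
      unfolding dist_real_def sgn_real_def by (smt (verit))
  qed
qed

lemma cont_sgn_on:
  fixes h :: "'a::topological_space \<Rightarrow> real"
  assumes "continuous_on S h" "\<forall>z\<in>S. h z \<noteq> 0"
  shows "continuous_on S (\<lambda>z. sgn (h z))"
proof -
  have "continuous_on (h ` S) sgn"
    by (rule continuous_at_imp_continuous_on) (use assms(2) in \<open>auto intro!: isCont_sgn\<close>)
  from continuous_on_compose[OF assms(1) this] show ?thesis by (simp add: o_def)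
qed

lemma sqrt_deriv_sgn: "(u::real) \<noteq> 0 \<Longrightarrow> (sqrt has_real_derivative (sgn u * inverse (sqrt u) * (1/2))) (at u)"
  by (rule DERIV_real_sqrt_generic) (auto simp: sgn_if)

lemma key:
  assumes "sm_alg I f"
  shows "continuous_on (UNIV \<times> I) (\<lambda>z. f (fst z) (snd z))
    \<and> (\<exists>fp. (\<forall>p t. t \<in> I \<longrightarrow> ((\<lambda>q. f q t) has_real_derivative fp p t) (at p)) \<and> sm_alg I fp)
    \<and> (\<exists>ft. (\<forall>p t. t \<in> I \<longrightarrow> ((\<lambda>s. f p s) has_real_derivative ft p t) (at t within I)) \<and> sm_alg I ft)"
  using assms
proof (induction rule: sm_alg.induct)
  case (base f)
  then show ?case
    by (cases rule: smooth_fam.cases) (auto simp: split_beta' intro: sm_alg.base)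
next
  case (const c)
  have s0: "sm_alg I (\<lambda>p t. 0)" by (rule sm_alg.const)
  have c: "continuous_on (UNIV \<times> I) (\<lambda>z. c)" by (rule continuous_on_const)
  have d1: "\<forall>p t. t \<in> I \<longrightarrow> ((\<lambda>q. c) has_real_derivative 0) (at p)" by simp
  have d2: "\<forall>p t. t \<in> I \<longrightarrow> ((\<lambda>s. c) has_real_derivative 0) (at t within I)" by simp
  show ?case
    apply (intro conjI)
      apply (rule c)
     apply (rule exI, rule conjI, rule d1, rule s0)
    apply (rule exI, rule conjI, rule d2, rule s0)
    done
next
  case (add f g)
  then obtain fp ft gp gt where
    a: "\<forall>p t. t \<in> I \<longrightarrow> ((\<lambda>q. f q t) has_real_derivative fp p t) (at p)" "sm_alg I fp"
    "\<forall>p t. t \<in> I \<longrightarrow> ((\<lambda>s. f p s) has_real_derivative ft p t) (at t within I)" "sm_alg I ft"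
    "\<forall>p t. t \<in> I \<longrightarrow> ((\<lambda>q. g q t) has_real_derivative gp p t) (at p)" "sm_alg I gp"
    "\<forall>p t. t \<in> I \<longrightarrow> ((\<lambda>s. g p s) has_real_derivative gt p t) (at t within I)" "sm_alg I gt"
    by blast
  have c: "continuous_on (UNIV \<times> I) (\<lambda>z. f (fst z) (snd z) + g (fst z) (snd z))"
    using add by (intro continuous_on_add) auto
  have d1: "\<forall>p t. t \<in> I \<longrightarrow> ((\<lambda>q. f q t + g q t) has_real_derivative (fp p t + gp p t)) (at p)"
    using a by (auto intro: DERIV_add)
  have d2: "\<forall>p t. t \<in> I \<longrightarrow> ((\<lambda>s. f p s + g p s) has_real_derivative (ft p t + gt p t)) (at t within I)"
    using a by (auto intro: DERIV_add)
  have s12: "sm_alg I (\<lambda>p t. fp p t + gp p t)" "sm_alg I (\<lambda>p t. ft p t + gt p t)"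
    using a by (auto intro: sm_alg.add)
  show ?case
    apply (intro conjI)
      apply (rule c)
     apply (rule exI, rule conjI, rule d1, rule s12(1))
    apply (rule exI, rule conjI, rule d2, rule s12(2))
    done
next
  case (mult f g)
  then obtain fp ft gp gt where
    a: "\<forall>p t. t \<in> I \<longrightarrow> ((\<lambda>q. f q t) has_real_derivative fp p t) (at p)" "sm_alg I fp"
    "\<forall>p t. t \<in> I \<longrightarrow> ((\<lambda>s. f p s) has_real_derivative ft p t) (at t within I)" "sm_alg I ft"
    "\<forall>p t. t \<in> I \<longrightarrow> ((\<lambda>q. g q t) has_real_derivative gp p t) (at p)" "sm_alg I gp"
    "\<forall>p t. t \<in> I \<longrightarrow> ((\<lambda>s. g p s) has_real_derivative gt p t) (at t within I)" "sm_alg I gt"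
    by blast
  have c: "continuous_on (UNIV \<times> I) (\<lambda>z. f (fst z) (snd z) * g (fst z) (snd z))"
    using mult by (intro continuous_on_mult) auto
  have d1: "\<forall>p t. t \<in> I \<longrightarrow> ((\<lambda>q. f q t * g q t) has_real_derivative (fp p t * g p t + gp p t * f p t)) (at p)"
    using a by (auto intro: DERIV_mult)
  have d2: "\<forall>p t. t \<in> I \<longrightarrow> ((\<lambda>s. f p s * g p s) has_real_derivative (ft p t * g p t + gt p t * f p t)) (at t within I)"
    using a by (auto intro: DERIV_mult)
  have s12: "sm_alg I (\<lambda>p t. fp p t * g p t + gp p t * f p t)" "sm_alg I (\<lambda>p t. ft p t * g p t + gt p t * f p t)"
    using a mult by (auto intro!: sm_alg.add sm_alg.mult)
  show ?case
    apply (intro conjI)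
      apply (rule c)
     apply (rule exI, rule conjI, rule d1, rule s12(1))
    apply (rule exI, rule conjI, rule d2, rule s12(2))
    done
next
  case (inv f)
  have sf: "sm_alg I f" using inv by blast
  have nzall: "\<forall>p t. t \<in> I \<longrightarrow> f p t \<noteq> 0" using inv by blast
  have nzs: "\<forall>p t. t \<in> I \<longrightarrow> sqrt (f p t) \<noteq> 0" using nzall by simp
  have c0: "continuous_on (UNIV \<times> I) (\<lambda>z. f (fst z) (snd z))" using inv by blast
  have nz0: "\<forall>z\<in>UNIV \<times> I. f (fst z) (snd z) \<noteq> 0" using nzall by auto
  from inv obtain fp ft where
    a: "\<forall>p t. t \<in> I \<longrightarrow> ((\<lambda>q. f q t) has_real_derivative fp p t) (at p)" "sm_alg I fp"
    "\<forall>p t. t \<in> I \<longrightarrow> ((\<lambda>s. f p s) has_real_derivative ft p t) (at t within I)" "sm_alg I ft"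
    by blast
  have c: "continuous_on (UNIV \<times> I) (\<lambda>z. inverse (f (fst z) (snd z)))"
    using c0 nz0 by (rule continuous_on_inverse)
  have e: "- (u * inverse (v ^ Suc (Suc 0))) = (- 1) * u * (inverse v * inverse v)" for u v :: real
    by (simp add: field_simps)
  have d1: "\<forall>p t. t \<in> I \<longrightarrow> ((\<lambda>q. inverse (f q t)) has_real_derivative ((- 1) * fp p t * (inverse (f p t) * inverse (f p t)))) (at p)"
    proof (intro allI impI)
    fix p t assume t: "t \<in> I"
    have nz: "f p t \<noteq> 0" using inv t by blast
    show "((\<lambda>q. inverse (f q t)) has_real_derivative ((- 1) * fp p t * (inverse (f p t) * inverse (f p t)))) (at p)" using DERIV_inverse_fun[OF a(1)[rule_format, OF t] nz] unfolding e .
  qed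
  have d2: "\<forall>p t. t \<in> I \<longrightarrow> ((\<lambda>s. inverse (f p s)) has_real_derivative ((- 1) * ft p t * (inverse (f p t) * inverse (f p t)))) (at t within I)"
    proof (intro allI impI)
    fix p t assume t: "t \<in> I"
    have nz: "f p t \<noteq> 0" using inv t by blast
    show "((\<lambda>s. inverse (f p s)) has_real_derivative ((- 1) * ft p t * (inverse (f p t) * inverse (f p t)))) (at t within I)" using DERIV_inverse_fun[OF a(3)[rule_format, OF t] nz] unfolding e .
  qed
  have s12a: "sm_alg I (\<lambda>p t. (- 1) * fp p t * (inverse (f p t) * inverse (f p t)))"
    by (rule sm_alg.mult[OF sm_alg.mult[OF sm_alg.const[of I "- 1"] a(2)] sm_alg.mult[OF sm_alg.inv[OF sf nzall] sm_alg.inv[OF sf nzall]]])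
  have s12b: "sm_alg I (\<lambda>p t. (- 1) * ft p t * (inverse (f p t) * inverse (f p t)))"
    by (rule sm_alg.mult[OF sm_alg.mult[OF sm_alg.const[of I "- 1"] a(4)] sm_alg.mult[OF sm_alg.inv[OF sf nzall] sm_alg.inv[OF sf nzall]]])
  note s12 = s12a s12b
  show ?case
    apply (intro conjI)
      apply (rule c)
     apply (rule exI, rule conjI, rule d1, rule s12(1))
    apply (rule exI, rule conjI, rule d2, rule s12(2))
    done
next
  case (sqr f)
  have sf: "sm_alg I f" using sqr by blast
  have nzall: "\<forall>p t. t \<in> I \<longrightarrow> f p t \<noteq> 0" using sqr by blast
  have nzs: "\<forall>p t. t \<in> I \<longrightarrow> sqrt (f p t) \<noteq> 0" using nzall by simp
  have c0: "continuous_on (UNIV \<times> I) (\<lambda>z. f (fst z) (snd z))" using sqr by blast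
  have nz0: "\<forall>z\<in>UNIV \<times> I. f (fst z) (snd z) \<noteq> 0" using nzall by auto
  from sqr obtain fp ft where
    a: "\<forall>p t. t \<in> I \<longrightarrow> ((\<lambda>q. f q t) has_real_derivative fp p t) (at p)" "sm_alg I fp"
    "\<forall>p t. t \<in> I \<longrightarrow> ((\<lambda>s. f p s) has_real_derivative ft p t) (at t within I)" "sm_alg I ft"
    by blast
  have c: "continuous_on (UNIV \<times> I) (\<lambda>z. sqrt (f (fst z) (snd z)))"
    using c0 by (rule continuous_on_real_sqrt)
  have sq: "(sqrt has_real_derivative (sgn u * inverse (sqrt u) * (1/2))) (at u)" if "u \<noteq> 0" for u :: real
    using that by (rule sqrt_deriv_sgn)
  have d1: "\<forall>p t. t \<in> I \<longrightarrow> ((\<lambda>q. sqrt (f q t)) has_real_derivative (sgn (f p t) * inverse (sqrt (f p t)) * (1/2) * fp p t)) (at p)"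
  proof (intro allI impI)
    fix p t assume t: "t \<in> I"
    have nz: "f p t \<noteq> 0" using sqr t by blast
    show "((\<lambda>q. sqrt (f q t)) has_real_derivative (sgn (f p t) * inverse (sqrt (f p t)) * (1/2) * fp p t)) (at p)"
      using DERIV_chain2[OF sq[OF nz] a(1)[rule_format, OF t]] .
  qed
  have d2: "\<forall>p t. t \<in> I \<longrightarrow> ((\<lambda>s. sqrt (f p s)) has_real_derivative (sgn (f p t) * inverse (sqrt (f p t)) * (1/2) * ft p t)) (at t within I)"
  proof (intro allI impI)
    fix p t assume t: "t \<in> I"
    have nz: "f p t \<noteq> 0" using sqr t by blast
    show "((\<lambda>s. sqrt (f p s)) has_real_derivative (sgn (f p t) * inverse (sqrt (f p t)) * (1/2) * ft p t)) (at t within I)"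
      using DERIV_chain2[OF sq[OF nz] a(3)[rule_format, OF t]] .
  qed
  have s12a: "sm_alg I (\<lambda>p t. sgn (f p t) * inverse (sqrt (f p t)) * (1/2) * fp p t)"
    by (rule sm_alg.mult[OF sm_alg.mult[OF sm_alg.mult[OF sm_alg.sg[OF sf nzall] sm_alg.inv[OF sm_alg.sqr[OF sf nzall] nzs]] sm_alg.const[of I "1/2"]] a(2)])
  have s12b: "sm_alg I (\<lambda>p t. sgn (f p t) * inverse (sqrt (f p t)) * (1/2) * ft p t)"
    by (rule sm_alg.mult[OF sm_alg.mult[OF sm_alg.mult[OF sm_alg.sg[OF sf nzall] sm_alg.inv[OF sm_alg.sqr[OF sf nzall] nzs]] sm_alg.const[of I "1/2"]] a(4)])
  note s12 = s12a s12b
  show ?case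
    apply (intro conjI)
      apply (rule c)
     apply (rule exI, rule conjI, rule d1, rule s12(1))
    apply (rule exI, rule conjI, rule d2, rule s12(2))
    done
next
  case (sg f)
  then obtain fp ft where
    a: "\<forall>p t. t \<in> I \<longrightarrow> ((\<lambda>q. f q t) has_real_derivative fp p t) (at p)"
    "\<forall>p t. t \<in> I \<longrightarrow> ((\<lambda>s. f p s) has_real_derivative ft p t) (at t within I)"
    by blast
  have s0: "sm_alg I (\<lambda>p t. 0)" by (rule sm_alg.const)
  have c0: "continuous_on (UNIV \<times> I) (\<lambda>z. f (fst z) (snd z))" using sg by blast
  have nzall: "\<forall>p t. t \<in> I \<longrightarrow> f p t \<noteq> 0" using sg by blast
  have nz0: "\<forall>z\<in>UNIV \<times> I. f (fst z) (snd z) \<noteq> 0" using nzall by auto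
  have c: "continuous_on (UNIV \<times> I) (\<lambda>z. sgn (f (fst z) (snd z)))"
    by (rule cont_sgn_on[OF c0 nz0])
  have d1: "\<forall>p t. t \<in> I \<longrightarrow> ((\<lambda>q. sgn (f q t)) has_real_derivative 0) (at p)"
  proof (intro allI impI)
    fix p t assume t: "t \<in> I"
    have nz: "f p t \<noteq> 0" using sg t by blast
    show "((\<lambda>q. sgn (f q t)) has_real_derivative 0) (at p)"
      using sgn_deriv0[OF DERIV_continuous[OF a(1)[rule_format, OF t]] nz UNIV_I] .
  qed
  have d2: "\<forall>p t. t \<in> I \<longrightarrow> ((\<lambda>s. sgn (f p s)) has_real_derivative 0) (at t within I)"
  proof (intro allI impI)
    fix p t assume t: "t \<in> I"
    have nz: "f p t \<noteq> 0" using sg t by blast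
    show "((\<lambda>s. sgn (f p s)) has_real_derivative 0) (at t within I)"
      using sgn_deriv0[OF DERIV_continuous[OF a(2)[rule_format, OF t]] nz t] .
  qed
  show ?case
    apply (intro conjI)
      apply (rule c)
     apply (rule exI, rule conjI, rule d1, rule s0)
    apply (rule exI, rule conjI, rule d2, rule s0)
    done
qed

lemma sm_alg_smooth: "sm_alg I f \<Longrightarrow> smooth_fam I f"
proof (coinduction arbitrary: f rule: smooth_fam.coinduct)
  case (smooth_fam f)
  have K: "continuous_on (UNIV \<times> I) (\<lambda>z. f (fst z) (snd z))
    \<and> (\<exists>fp. (\<forall>p t. t \<in> I \<longrightarrow> ((\<lambda>q. f q t) has_real_derivative fp p t) (at p)) \<and> sm_alg I fp)
    \<and> (\<exists>ft. (\<forall>p t. t \<in> I \<longrightarrow> ((\<lambda>s. f p s) has_real_derivative ft p t) (at t within I)) \<and> sm_alg I ft)"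
    by (rule key[OF smooth_fam])
  then have c: "continuous_on (UNIV \<times> I) (\<lambda>z. f (fst z) (snd z))" by (rule conjunct1)
  have c': "continuous_on (UNIV \<times> I) (\<lambda>(x, y). f x y)"
    using c by (simp add: split_beta')
  from K have "\<exists>fp. (\<forall>p t. t \<in> I \<longrightarrow> ((\<lambda>q. f q t) has_real_derivative fp p t) (at p)) \<and> sm_alg I fp"
    by (rule conjunct1[OF conjunct2])
  then obtain fp where fp: "\<forall>p t. t \<in> I \<longrightarrow> ((\<lambda>q. f q t) has_real_derivative fp p t) (at p)" "sm_alg I fp"
    by (elim exE conjE)
  from K have "\<exists>ft. (\<forall>p t. t \<in> I \<longrightarrow> ((\<lambda>s. f p s) has_real_derivative ft p t) (at t within I)) \<and> sm_alg I ft"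
    by (rule conjunct2[OF conjunct2])
  then obtain ft where ft: "\<forall>p t. t \<in> I \<longrightarrow> ((\<lambda>s. f p s) has_real_derivative ft p t) (at t within I)" "sm_alg I ft"
    by (elim exE conjE)
  show ?case
    apply (rule exI[of _ f], rule exI[of _ fp], rule exI[of _ ft])
    apply (intro conjI refl c' fp(1) ft(1))
     apply (rule disjI1, rule exI[of _ fp], rule conjI[OF refl fp(2)])
    apply (rule disjI1, rule exI[of _ ft], rule conjI[OF refl ft(2)])
    done
qed

lemma smooth_agree:
  assumes "smooth_fam I f" "\<forall>p t. t \<in> I \<longrightarrow> g p t = f p t"
  shows "smooth_fam I g"
  using assms
proof (coinduction arbitrary: f g rule: smooth_fam.coinduct)
  case (smooth_fam f g)
  from smooth_fam(1) obtain fp ft where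
    c: "continuous_on (UNIV \<times> I) (\<lambda>(p,t). f p t)" and
    d1: "\<forall>p t. t \<in> I \<longrightarrow> ((\<lambda>q. f q t) has_real_derivative fp p t) (at p)" and
    d2: "\<forall>p t. t \<in> I \<longrightarrow> ((\<lambda>s. f p s) has_real_derivative ft p t) (at t within I)" and
    s: "smooth_fam I fp" "smooth_fam I ft"
    by (cases rule: smooth_fam.cases) blast
  have ag: "t \<in> I \<Longrightarrow> g p t = f p t" for p t using smooth_fam(2) by blast
  have c': "continuous_on (UNIV \<times> I) (\<lambda>(p,t). g p t)"
    by (rule continuous_on_cong[THEN iffD1, OF refl _ c]) (auto simp: ag)
  have d1': "\<forall>p t. t \<in> I \<longrightarrow> ((\<lambda>q. g q t) has_real_derivative fp p t) (at p)"
  proof (intro allI impI)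
    fix p t assume t: "t \<in> I"
    have "(\<lambda>q. g q t) = (\<lambda>q. f q t)" using ag[OF t] by auto
    then show "((\<lambda>q. g q t) has_real_derivative fp p t) (at p)" using d1 t by simp
  qed
  have d2': "\<forall>p t. t \<in> I \<longrightarrow> ((\<lambda>s. g p s) has_real_derivative ft p t) (at t within I)"
  proof (intro allI impI)
    fix p t assume t: "t \<in> I"
    show "((\<lambda>s. g p s) has_real_derivative ft p t) (at t within I)"
      by (rule has_field_derivative_transform_within[OF d2[rule_format, OF t] zero_less_one t])
         (simp add: ag)
  qed
  show ?case
    apply (rule exI[of _ g], rule exI[of _ fp], rule exI[of _ ft])
    apply (intro conjI refl c' d1' d2')
     apply (rule disjI2, rule s(1))
    apply (rule disjI2, rule s(2))
    done
qed

lemma sm_base: "smooth_fam I f \<Longrightarrow> sm_alg I f" by (rule sm_alg.base)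

lemma sm_add: "smooth_fam I f \<Longrightarrow> smooth_fam I g \<Longrightarrow> smooth_fam I (\<lambda>p t. f p t + g p t)"
  by (rule sm_alg_smooth, rule sm_alg.add, erule sm_base, erule sm_base)

lemma sm_mult: "smooth_fam I f \<Longrightarrow> smooth_fam I g \<Longrightarrow> smooth_fam I (\<lambda>p t. f p t * g p t)"
  by (rule sm_alg_smooth, rule sm_alg.mult, erule sm_base, erule sm_base)

lemma sm_diff: "smooth_fam I f \<Longrightarrow> smooth_fam I g \<Longrightarrow> smooth_fam I (\<lambda>p t. f p t - g p t)"
proof -
  assume a: "smooth_fam I f" "smooth_fam I g"
  have "smooth_fam I (\<lambda>p t. f p t + (- 1) * g p t)"
    by (rule sm_alg_smooth, rule sm_alg.add, rule sm_base[OF a(1)], rule sm_alg.mult, rule sm_alg.const, rule sm_base[OF a(2)])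
  moreover have "(\<lambda>p t. f p t + (- 1) * g p t) = (\<lambda>p t. f p t - g p t)" by (intro ext) simp
  ultimately show ?thesis by simp
qed

lemma sm_div: "smooth_fam I f \<Longrightarrow> smooth_fam I g \<Longrightarrow> \<forall>p t. t \<in> I \<longrightarrow> g p t \<noteq> 0 \<Longrightarrow>
    smooth_fam I (\<lambda>p t. f p t / g p t)"
proof -
  assume a: "smooth_fam I f" "smooth_fam I g" "\<forall>p t. t \<in> I \<longrightarrow> g p t \<noteq> 0"
  have "smooth_fam I (\<lambda>p t. f p t * inverse (g p t))"
    by (rule sm_alg_smooth, rule sm_alg.mult, rule sm_base[OF a(1)], rule sm_alg.inv, rule sm_base[OF a(2)], rule a(3))
  moreover have "(\<lambda>p t. f p t * inverse (g p t)) = (\<lambda>p t. f p t / g p t)" by (intro ext) (simp add: divide_inverse)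
  ultimately show ?thesis by simp
qed

lemma sm_sqrt: "smooth_fam I f \<Longrightarrow> \<forall>p t. t \<in> I \<longrightarrow> f p t \<noteq> 0 \<Longrightarrow> smooth_fam I (\<lambda>p t. sqrt (f p t))"
  by (rule sm_alg_smooth, rule sm_alg.sqr[OF sm_base]) assumption+

lemma smooth_cont: "smooth_fam I f \<Longrightarrow> continuous_on (UNIV \<times> I) (\<lambda>(p,t). f p t)"
  by (erule smooth_fam.cases) simp

lemma dp_deriv: assumes "smooth_fam I f" "t \<in> I" shows "((\<lambda>q. f q t) has_real_derivative dp f p t) (at p)"
  using assms(1)
proof (cases rule: smooth_fam.cases)
  case (1 fp ft)
  then have D: "((\<lambda>q. f q t) has_real_derivative fp p t) (at p)" using assms(2) by blast
  then have "dp f p t = fp p t" unfolding dp_def by (rule DERIV_imp_deriv)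
  with D show ?thesis by simp
qed

lemma sm_dp: assumes "smooth_fam I f" shows "smooth_fam I (dp f)"
  using assms
proof (cases rule: smooth_fam.cases)
  case (1 fp ft)
  have "\<forall>p t. t \<in> I \<longrightarrow> dp f p t = fp p t"
    unfolding dp_def using 1 by (auto intro: DERIV_imp_deriv)
  then show "smooth_fam I (dp f)" by (rule smooth_agree[OF 1(4)])
qed

lemma dt_deriv:
  assumes "smooth_fam {0..<T} f" "0 < t" "t < T"
  shows "((\<lambda>s. f p s) has_real_derivative dt T f p t) (at t)"
  using assms(1)
proof (cases rule: smooth_fam.cases)
  case (1 fp ft)
  have tI: "t \<in> {0..<T}" using assms by auto
  have int: "t \<in> interior {0..<T}" using assms by simp
  have "((\<lambda>s. f p s) has_real_derivative ft p t) (at t within {0..<T})" using 1 tI by blast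
  then have D: "((\<lambda>s. f p s) has_real_derivative ft p t) (at t)" by (simp add: at_within_interior[OF int])
  then have "vector_derivative (\<lambda>s. f p s) (at t) = ft p t"
    by (intro vector_derivative_at) (simp add: has_real_derivative_iff_has_vector_derivative)
  then have "dt T f p t = ft p t" unfolding dt_def by (simp add: at_within_interior[OF int])
  with D show ?thesis by simp
qed

lemma per_nat:
  assumes "\<And>p. g (p + 1) = (g p :: real)"
  shows "g (p + real n) = g p"
proof (induction n)
  case 0 then show ?case by simp
next
  case (Suc n)
  have "g (p + real (Suc n)) = g ((p + real n) + 1)" by (simp add: algebra_simps)
  also have "\<dots> = g (p + real n)" by (rule assms)
  finally show ?case using Suc by simp
qed

lemma per_reduce:
  fixes g :: "real \<Rightarrow> real" and p :: real
  assumes "\<And>p. g (p + 1) = (g p :: real)"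
  shows "\<exists>q\<in>{0..1}. g p = g q"
proof -
  define q where "q = p - of_int (floor p)"
  have q01: "q \<in> {0..1}" 
  proof -
    have "of_int (floor p) \<le> p" by (rule of_int_floor_le)
    moreover have "p < of_int (floor p) + 1" by (rule real_of_int_floor_add_one_gt)
    ultimately show ?thesis unfolding q_def atLeastAtMost_iff by linarith
  qed
  show ?thesis
  proof (cases "floor p \<ge> 0")
    case True
    then have "of_int (floor p) = real (nat (floor p))" by simp
    then have "p = q + real (nat (floor p))" unfolding q_def by simp
    then have "g p = g q" using per_nat[of g q "nat (floor p)", OF assms] by simp
    with q01 show ?thesis by blast
  next
    case False
    then have "of_int (floor p) = - real (nat (- floor p))" by simp
    then have "q = p + real (nat (- floor p))" unfolding q_def by simp
    then have "g q = g p" using per_nat[of g p "nat (- floor p)", OF assms] by simp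
    then have "g p = g q" by simp
    with q01 show ?thesis by blast
  qed
qed

lemma max_principle:
  fixes F F1 F2 Ft :: "real \<Rightarrow> real \<Rightarrow> real" and T :: real
  assumes cont: "continuous_on (UNIV \<times> {0..<T}) (\<lambda>(p,t). F p t)"
  and per: "\<And>p t. 0 \<le> t \<Longrightarrow> t < T \<Longrightarrow> F (p+1) t = F p t"
  and d1: "\<And>p t. 0 \<le> t \<Longrightarrow> t < T \<Longrightarrow> ((\<lambda>q. F q t) has_real_derivative F1 p t) (at p)"
  and d2: "\<And>p t. 0 \<le> t \<Longrightarrow> t < T \<Longrightarrow> ((\<lambda>q. F1 q t) has_real_derivative F2 p t) (at p)"
  and dtt: "\<And>p t. 0 < t \<Longrightarrow> t < T \<Longrightarrow> ((\<lambda>s. F p s) has_real_derivative Ft p t) (at t)"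
  and H: "\<And>p t. 0 < t \<Longrightarrow> t < T \<Longrightarrow> F p t > 2 \<Longrightarrow> F1 p t = 0 \<Longrightarrow> F2 p t \<le> 0 \<Longrightarrow> Ft p t < 0"
  and t1: "0 \<le> t1" "t1 < T"
  shows "F p1 t1 \<le> max 2 (SUP q. F q 0)"
proof -
  have T0: "0 < T" using t1 by simp
  have red: "\<exists>q\<in>{0..1}. F p t = F q t" if "0 \<le> t" "t < T" for p t
    by (rule per_reduce) (rule per[OF that])
  have c0: "continuous_on {0..1} (\<lambda>q. F q 0)"
  proof -
    have "continuous_on {0..1} (\<lambda>q. (\<lambda>(p,t). F p t) (q, 0::real))"
      by (rule continuous_on_compose2[OF cont]) (auto intro!: continuous_intros simp: T0)
    then show ?thesis by simp
  qed
  obtain qm where qm: "qm \<in> {0..1}" "\<forall>y\<in>{0..1}. F y 0 \<le> F qm 0"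
    using continuous_attains_sup[OF compact_Icc _ c0] by auto
  have bdd: "bdd_above (range (\<lambda>q. F q 0))"
  proof (rule bdd_aboveI)
    fix x assume "x \<in> range (\<lambda>q. F q 0)"
    then obtain q where x: "x = F q 0" by auto
    obtain r where r: "r \<in> {0..1}" "F q 0 = F r 0" using red[of 0 q] T0 by auto
    show "x \<le> F qm 0" using x r qm by simp
  qed
  define M where "M = max 2 (SUP q. F q 0)"
  have M0: "F q 0 \<le> M" for q
    unfolding M_def using cSUP_upper[OF UNIV_I bdd, of q] by simp
  have M2: "2 \<le> M" unfolding M_def by simp
  show ?thesis
  proof (rule ccontr)
    assume "\<not> ?thesis"
    then have gt: "F p1 t1 > M" unfolding M_def by linarith
    define c where "c = F p1 t1"
    define K where "K = {0..(1::real)} \<times> {0..t1}"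
    define S where "S = {z \<in> K. c \<le> F (fst z) (snd (z::real\<times>real))}"
    have KI: "K \<subseteq> UNIV \<times> {0..<T}" unfolding K_def using t1 by auto
    have contK: "continuous_on K (\<lambda>z. F (fst z) (snd z))"
    proof -
      have "continuous_on K (\<lambda>(p,t). F p t)" by (rule continuous_on_subset[OF cont KI])
      then show ?thesis by (simp add: split_beta')
    qed
    have clS: "closed S" unfolding S_def
      by (rule continuous_on_closed_Collect_le[OF continuous_on_const contK])
         (simp add: K_def closed_Times)
    have cK: "compact K" unfolding K_def by (simp add: compact_Times)
    have SK: "S \<subseteq> K" unfolding S_def by auto
    have cS: "compact S"
    proof -
      have "compact (K \<inter> S)" by (rule compact_Int_closed[OF cK clS])
      moreover have "K \<inter> S = S" using SK by auto
      ultimately show ?thesis by simp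
    qed
    obtain r1 where r1: "r1 \<in> {0..1}" "F p1 t1 = F r1 t1" using red[OF t1(1) t1(2)] by blast
    have Sne: "(r1, t1) \<in> S" unfolding S_def K_def c_def using r1 t1 by auto
    obtain z where z: "z \<in> S" "\<forall>y\<in>S. snd z \<le> snd y"
    proof -
      have "S \<noteq> {}" using Sne by blast
      from continuous_attains_inf[OF cS this continuous_on_snd[OF continuous_on_id]]
      show ?thesis using that by blast
    qed
    define ps where "ps = fst z"
    define ts where "ts = snd z"
    have zK: "ps \<in> {0..1}" "0 \<le> ts" "ts \<le> t1" and zc: "c \<le> F ps ts"
      using z(1) unfolding S_def K_def ps_def ts_def by auto
    have tsT: "ts < T" using zK t1 by simp
    have cM: "c > M" using gt c_def by simp
    have "ts \<noteq> 0"
    proof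
      assume "ts = 0"
      then have "F ps ts \<le> M" using M0 by simp
      then show False using zc cM by simp
    qed
    then have ts0: "0 < ts" using zK by simp
    have below: "F q s < c" if hs: "0 \<le> s" "s < ts" for q s
    proof (rule ccontr)
      assume "\<not> F q s < c"
      then have ge: "c \<le> F q s" by simp
      have sT: "s < T" using hs tsT by simp
      obtain r where r: "r \<in> {0..1}" "F q s = F r s" using red[OF hs(1) sT] by blast
      have "(r, s) \<in> S" unfolding S_def K_def using r ge hs zK by auto
      then have "ts \<le> s" using z(2) unfolding ts_def by fastforce
      then show False using hs by simp
    qed
    have atmost: "F q ts \<le> c" for q
    proof (rule ccontr)
      assume "\<not> F q ts \<le> c"
      then have e: "F q ts - c > 0" by simp
      have "isCont (\<lambda>s. F q s) ts" by (rule DERIV_isCont[OF dtt[OF ts0 tsT]])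
      then have "continuous (at ts within UNIV) (\<lambda>s. F q s)" by simp
      then obtain d where d: "d > 0" "\<forall>x'\<in>UNIV. dist x' ts < d \<longrightarrow> dist (F q x') (F q ts) < F q ts - c"
        unfolding continuous_within_eps_delta using e by meson
      define s where "s = ts - min (d/2) (ts/2)"
      have s: "0 \<le> s" "s < ts" "dist s ts < d" unfolding s_def using d ts0 by (auto simp: dist_real_def)
      then have "dist (F q s) (F q ts) < F q ts - c" using d by simp
      then have "F q s > c" by (simp add: dist_real_def)
      then show False using below[OF s(1,2), of q] by simp
    qed
    have Fc: "F ps ts = c" using zc atmost[of ps] by simp
    have F2c: "F ps ts > 2" using Fc cM M2 by simp
    have F1z: "F1 ps ts = 0"
      by (rule DERIV_local_max[OF d1[OF zK(2) tsT] zero_less_one]) (use atmost Fc in auto)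
    have F2z: "F2 ps ts \<le> 0"
    proof (rule ccontr)
      assume "\<not> F2 ps ts \<le> 0"
      then have "F2 ps ts > 0" by simp
      from DERIV_pos_inc_right[OF d2[OF zK(2) tsT] this] obtain d where
        d: "d > 0" "\<forall>h>0. h < d \<longrightarrow> F1 ps ts < F1 (ps + h) ts" by blast
      define b where "b = ps + d/2"
      have "ps < b" unfolding b_def using d by simp
      from MVT2[OF this, of "\<lambda>q. F q ts" "\<lambda>x. F1 x ts"] d1[OF zK(2) tsT]
      obtain w where w: "w > ps" "w < b" "F b ts - F ps ts = (b - ps) * F1 w ts" by blast
      have "w - ps > 0" "w - ps < d" using d w unfolding b_def by auto
      then have "F1 ps ts < F1 (ps + (w - ps)) ts" using d(2) by blast
      then have "F1 w ts > 0" using F1z by simp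
      then have "F b ts - F ps ts > 0" using w by simp
      then show False using atmost[of b] Fc by simp
    qed
    have "Ft ps ts < 0" by (rule H[OF ts0 tsT F2c F1z F2z])
    from DERIV_neg_dec_left[OF dtt[OF ts0 tsT] this] obtain d where
      d: "d > 0" "\<forall>h>0. h < d \<longrightarrow> F ps ts < F ps (ts - h)" by blast
    define h where "h = min (d/2) (ts/2)"
    have h: "h > 0" "h < d" "0 \<le> ts - h" "ts - h < ts" unfolding h_def using d ts0 by auto
    have "F ps ts < F ps (ts - h)" using d h by simp
    moreover have "F ps (ts - h) < c" using below[OF h(3,4)] .
    ultimately show False using Fc by simp
  qed
qed

definition per_at :: "(real \<Rightarrow> real \<Rightarrow> real) \<Rightarrow> real \<Rightarrow> bool" where
  "per_at f t \<longleftrightarrow> (\<forall>q. f (q + 1) t = f q t)"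

lemma per_dp: assumes "per_at f t" shows "per_at (dp f) t"
  unfolding per_at_def
proof
  fix p
  have eq: "(\<lambda>q. f (q + 1) t) = (\<lambda>q. f q t)" using assms by (simp add: per_at_def)
  have "\<And>D. ((\<lambda>q. f q t) has_real_derivative D) (at (p + 1)) \<longleftrightarrow> ((\<lambda>q. f q t) has_real_derivative D) (at p)"
    using DERIV_shift[of "\<lambda>q. f q t" _ p 1] eq by simp
  then show "dp f (p + 1) t = dp f p t" unfolding dp_def deriv_def by simp
qed

lemma per_metric: "per_at x t \<Longrightarrow> per_at y t \<Longrightarrow> per_at (ca_metric x y) t"
  using per_dp[of x t] per_dp[of y t] per_dp[of "dp x" t] per_dp[of "dp y" t]
  unfolding per_at_def ca_metric_def by simp

lemma per_dxi: "per_at x t \<Longrightarrow> per_at y t \<Longrightarrow> per_at f t \<Longrightarrow> per_at (dxi x y f) t"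
  using per_dp[of f t] per_metric[of x t y]
  unfolding per_at_def dxi_def by simp

lemma per_curv: "per_at x t \<Longrightarrow> per_at y t \<Longrightarrow> per_at (ca_curv x y) t"
proof -
  assume a: "per_at x t" "per_at y t"
  have "per_at (dxi x y x) t" "per_at (dxi x y y) t" using per_dxi a by blast+
  then have "per_at (dxi x y (dxi x y x)) t" "per_at (dxi x y (dxi x y y)) t" using per_dxi a by blast+
  with a \<open>per_at (dxi x y x) t\<close> \<open>per_at (dxi x y y) t\<close> show ?thesis
    unfolding per_at_def ca_curv_def by simp
qed

lemma dxi_eq: "dxi x y f = (\<lambda>p t. dp f p t / ca_metric x y p t)"
  by (intro ext) (simp add: dxi_def)

lemma dxi2_crit:
  assumes sf: "smooth_fam {0..<T} f" and sG: "smooth_fam {0..<T} (ca_metric x y)"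
    and t: "0 \<le> t" "t < T" and G0: "ca_metric x y p t \<noteq> 0" and f1: "dp f p t = 0"
  shows "dxi x y (dxi x y f) p t = dp (dp f) p t / (ca_metric x y p t)^2"
proof -
  let ?G = "ca_metric x y"
  have tI: "t \<in> {0..<T}" using t by simp
  have D1: "((\<lambda>q. dp f q t) has_real_derivative dp (dp f) p t) (at p)"
    by (rule dp_deriv[OF sm_dp[OF sf] tI])
  have D2: "((\<lambda>q. ?G q t) has_real_derivative dp ?G p t) (at p)"
    by (rule dp_deriv[OF sG tI])
  have "((\<lambda>q. dp f q t / ?G q t) has_real_derivative
      (dp (dp f) p t * ?G p t - dp f p t * dp ?G p t) / (?G p t * ?G p t)) (at p)"
    by (rule DERIV_divide[OF D1 D2 G0])
  then have "deriv (\<lambda>q. dp f q t / ?G q t) p = (dp (dp f) p t * ?G p t - dp f p t * dp ?G p t) / (?G p t * ?G p t)"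
    by (rule DERIV_imp_deriv)
  then have "dp (dxi x y f) p t = dp (dp f) p t / ?G p t"
    unfolding dxi_eq dp_def[of "\<lambda>p t. dp f p t / ?G p t"] using f1 G0 by simp
  then show ?thesis unfolding dxi_def[of x y "dxi x y f"] using G0 by (simp add: power2_eq_square)
qed

theorem lemma3p2:
  fixes x y :: "real \<Rightarrow> real \<Rightarrow> real" and T :: real
  assumes smooth_x: "smooth_fam {0..<T} x"
    and smooth_y: "smooth_fam {0..<T} y"
    and closed: "\<And>p t. 0 \<le> t \<Longrightarrow> t < T \<Longrightarrow> x (p + 1) t = x p t \<and> y (p + 1) t = y p t"
    and nondeg1: "\<And>p t. 0 \<le> t \<Longrightarrow> t < T \<Longrightarrow> det2 (x p t) (y p t) (dp x p t) (dp y p t) \<noteq> 0"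
    and nondeg2: "\<And>p t. 0 \<le> t \<Longrightarrow> t < T \<Longrightarrow>
                    det2 (dp x p t) (dp y p t) (dp (dp x) p t) (dp (dp y) p t) \<noteq> 0"
    and flow: "\<And>p t. 0 \<le> t \<Longrightarrow> t < T \<Longrightarrow>
       dt T (ca_curv x y) p t
         = 1/2 * dxi x y (dxi x y (ca_curv x y)) p t - 1/2 * (ca_curv x y p t)^3
           + 2 * ca_curv x y p t"
  shows "\<forall>p t. 0 \<le> t \<and> t < T \<longrightarrow>
           min (-2) (INF q. ca_curv x y q 0) \<le> ca_curv x y p t
           \<and> ca_curv x y p t \<le> max 2 (SUP q. ca_curv x y q 0)"
proof -
  define I where "I = {0..<T}"
  define G where "G = ca_metric x y"
  define \<phi> where "\<phi> = ca_curv x y"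
  have sx: "smooth_fam I x" and sy: "smooth_fam I y" using smooth_x smooth_y I_def by auto
  have n1: "\<forall>p t. t \<in> I \<longrightarrow> x p t * dp y p t - y p t * dp x p t \<noteq> 0"
    using nondeg1 unfolding I_def det2_def by auto
  have n2: "\<forall>p t. t \<in> I \<longrightarrow> dp x p t * dp (dp y) p t - dp y p t * dp (dp x) p t \<noteq> 0"
    using nondeg2 unfolding I_def det2_def by auto
  have Geq: "G = (\<lambda>p t. sqrt ((dp x p t * dp (dp y) p t - dp y p t * dp (dp x) p t)
       / (x p t * dp y p t - y p t * dp x p t)))"
    unfolding G_def by (intro ext) (simp add: ca_metric_def det2_def)
  have nq: "\<forall>p t. t \<in> I \<longrightarrow> (dp x p t * dp (dp y) p t - dp y p t * dp (dp x) p t)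
       / (x p t * dp y p t - y p t * dp x p t) \<noteq> 0"
    using n1 n2 by simp
  have sG: "smooth_fam I G" unfolding Geq
    by (intro sm_sqrt sm_div sm_diff sm_mult sm_dp sx sy n1 nq)
  have G0: "\<forall>p t. t \<in> I \<longrightarrow> G p t \<noteq> 0" unfolding Geq using nq by simp
  have sdxi: "smooth_fam I (dxi x y f)" if "smooth_fam I f" for f
    unfolding dxi_eq G_def[symmetric] by (rule sm_div[OF sm_dp[OF that] sG G0])
  define X1 where "X1 = dxi x y x"
  define Y1 where "Y1 = dxi x y y"
  have sX1: "smooth_fam I X1" "smooth_fam I Y1" unfolding X1_def Y1_def using sdxi sx sy by auto
  have sX2: "smooth_fam I (dxi x y X1)" "smooth_fam I (dxi x y Y1)" using sdxi sX1 by auto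
  have den: "\<forall>p t. t \<in> I \<longrightarrow> X1 p t * y p t - Y1 p t * x p t \<noteq> 0"
  proof (intro allI impI)
    fix p t assume t: "t \<in> I"
    have Gpt: "G p t \<noteq> 0" using G0 t by blast
    have "X1 p t * y p t - Y1 p t * x p t = - (x p t * dp y p t - y p t * dp x p t) / G p t"
      unfolding X1_def Y1_def dxi_def G_def[symmetric] using Gpt by (simp add: field_simps)
    moreover have "x p t * dp y p t - y p t * dp x p t \<noteq> 0" using n1 t by blast
    ultimately show "X1 p t * y p t - Y1 p t * x p t \<noteq> 0" using Gpt by simp
  qed
  have \<phi>eq: "\<phi> = (\<lambda>p t. (dxi x y X1 p t * y p t - dxi x y Y1 p t * x p t) / (X1 p t * y p t - Y1 p t * x p t))"
    unfolding \<phi>_def X1_def Y1_def by (intro ext) (simp add: ca_curv_def det2_def)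
  have s\<phi>: "smooth_fam I \<phi>" unfolding \<phi>eq
    by (intro sm_div sm_diff sm_mult sX1 sX2 sx sy den)
  have sphi: "smooth_fam {0..<T} \<phi>" using s\<phi> unfolding I_def .
  have sGT: "smooth_fam {0..<T} (ca_metric x y)" using sG unfolding I_def G_def .
  have per\<phi>: "\<phi> (p + 1) t = \<phi> p t" if "0 \<le> t" "t < T" for p t
  proof -
    have "per_at x t" "per_at y t" using closed[OF that] unfolding per_at_def by auto
    then have "per_at \<phi> t" unfolding \<phi>_def by (rule per_curv)
    then show ?thesis unfolding per_at_def by blast
  qed
  have cont\<phi>: "continuous_on (UNIV \<times> {0..<T}) (\<lambda>(p,t). \<phi> p t)" by (rule smooth_cont[OF sphi])
  have d1\<phi>: "((\<lambda>q. \<phi> q t) has_real_derivative dp \<phi> p t) (at p)" if "0 \<le> t" "t < T" for p t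
    by (rule dp_deriv[OF sphi]) (use that in simp)
  have d2\<phi>: "((\<lambda>q. dp \<phi> q t) has_real_derivative dp (dp \<phi>) p t) (at p)" if "0 \<le> t" "t < T" for p t
    by (rule dp_deriv[OF sm_dp[OF sphi]]) (use that in simp)
  have dt\<phi>: "((\<lambda>s. \<phi> p s) has_real_derivative dt T \<phi> p s) (at s)" if "0 < s" "s < T" for p s
    by (rule dt_deriv[OF sphi that])
  have G0': "ca_metric x y p t \<noteq> 0" if "0 \<le> t" "t < T" for p t
    using G0 that unfolding I_def G_def by auto
  have dxi2: "dxi x y (dxi x y \<phi>) p t = dp (dp \<phi>) p t / (ca_metric x y p t)^2"
    if "0 \<le> t" "t < T" "dp \<phi> p t = 0" for p t
    by (rule dxi2_crit[OF sphi sGT that(1,2) G0'[OF that(1,2)] that(3)])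
  have flow\<phi>: "dt T \<phi> p t = 1/2 * dxi x y (dxi x y \<phi>) p t - 1/2 * (\<phi> p t)^3 + 2 * \<phi> p t"
    if "0 \<le> t" "t < T" for p t
    unfolding \<phi>_def by (rule flow[OF that])
  have H1: "dt T \<phi> p t < 0"
    if t: "0 < t" "t < T" and gt: "\<phi> p t > 2" and f1: "dp \<phi> p t = 0" and f2: "dp (dp \<phi>) p t \<le> 0" for p t
  proof -
    have t0: "0 \<le> t" using t by simp
    have "(ca_metric x y p t)^2 > 0" using G0'[OF t0 t(2)] by simp
    then have A: "dxi x y (dxi x y \<phi>) p t \<le> 0" unfolding dxi2[OF t0 t(2) f1]
      by (rule divide_nonpos_pos[OF f2])
    have "2 * 2 < \<phi> p t * \<phi> p t" by (rule mult_strict_mono[OF gt gt]) (use gt in auto)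
    then have "(\<phi> p t)^2 > 4" by (simp add: power2_eq_square)
    then have "\<phi> p t * 4 < \<phi> p t * (\<phi> p t)^2" using gt by (intro mult_strict_left_mono) auto
    then have B: "- 1/2 * (\<phi> p t)^3 + 2 * \<phi> p t < 0" by (simp add: power3_eq_cube power2_eq_square)
    show ?thesis using flow\<phi>[OF t0 t(2)] A B by simp
  qed
  have H2: "- dt T \<phi> p t < 0"
    if t: "0 < t" "t < T" and gt: "- \<phi> p t > 2" and f1: "- dp \<phi> p t = 0" and f2: "- dp (dp \<phi>) p t \<le> 0" for p t
  proof -
    have t0: "0 \<le> t" using t by simp
    have f1': "dp \<phi> p t = 0" using f1 by simp
    have "(ca_metric x y p t)^2 > 0" using G0'[OF t0 t(2)] by simp
    moreover have "dp (dp \<phi>) p t \<ge> 0" using f2 by simp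
    ultimately have A: "dxi x y (dxi x y \<phi>) p t \<ge> 0" unfolding dxi2[OF t0 t(2) f1']
      by simp
    have "2 * 2 < (- \<phi> p t) * (- \<phi> p t)" by (rule mult_strict_mono[OF gt gt]) (use gt in auto)
    then have "(\<phi> p t)^2 > 4" by (simp add: power2_eq_square)
    then have "\<phi> p t * (\<phi> p t)^2 < \<phi> p t * 4" using gt by (intro mult_strict_left_mono_neg) auto
    then have B: "- 1/2 * (\<phi> p t)^3 + 2 * \<phi> p t > 0" by (simp add: power3_eq_cube power2_eq_square)
    show ?thesis using flow\<phi>[OF t0 t(2)] A B by simp
  qed
  have upper: "\<phi> p t \<le> max 2 (SUP q. \<phi> q 0)" if "0 \<le> t" "t < T" for p t
    by (rule max_principle[of T \<phi> "dp \<phi>" "dp (dp \<phi>)" "dt T \<phi>", OF cont\<phi> per\<phi> d1\<phi> d2\<phi> dt\<phi> H1 that])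
  have lower0: "- \<phi> p t \<le> max 2 (SUP q. - \<phi> q 0)" if "0 \<le> t" "t < T" for p t
  proof (rule max_principle[of T "\<lambda>p t. - \<phi> p t" "\<lambda>p t. - dp \<phi> p t" "\<lambda>p t. - dp (dp \<phi>) p t" "\<lambda>p t. - dt T \<phi> p t"])
    have "continuous_on (UNIV \<times> {0..<T}) (\<lambda>z. - (\<lambda>(p,t). \<phi> p t) z)"
      by (rule continuous_on_minus[OF cont\<phi>])
    then show "continuous_on (UNIV \<times> {0..<T}) (\<lambda>(p,t). - \<phi> p t)" by (simp add: split_beta')
  next
    show "- \<phi> (p + 1) t = - \<phi> p t" if "0 \<le> t" "t < T" for p t using per\<phi>[OF that] by simp
  next
    show "((\<lambda>q. - \<phi> q t) has_real_derivative - dp \<phi> p t) (at p)" if "0 \<le> t" "t < T" for p t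
      by (rule DERIV_minus[OF d1\<phi>[OF that]])
  next
    show "((\<lambda>q. - dp \<phi> q t) has_real_derivative - dp (dp \<phi>) p t) (at p)" if "0 \<le> t" "t < T" for p t
      by (rule DERIV_minus[OF d2\<phi>[OF that]])
  next
    show "((\<lambda>s. - \<phi> p s) has_real_derivative - dt T \<phi> p t) (at t)" if "0 < t" "t < T" for p t
      by (rule DERIV_minus[OF dt\<phi>[OF that]])
  next
    show "- dt T \<phi> p t < 0" if "0 < t" "t < T" "- \<phi> p t > 2" "- dp \<phi> p t = 0" "- dp (dp \<phi>) p t \<le> 0" for p t
      by (rule H2[OF that])
  qed (use that in auto)
  have infeq: "(INF q. \<phi> q 0) = - (SUP q. - \<phi> q 0)"
    by (simp add: Inf_real_def image_image)
  show ?thesis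
  proof (intro allI impI conjI)
    fix p t assume pt: "0 \<le> t \<and> t < T"
    show "ca_curv x y p t \<le> max 2 (SUP q. ca_curv x y q 0)"
      using upper[of t p] pt unfolding \<phi>_def by simp
    have "- \<phi> p t \<le> max 2 (SUP q. - \<phi> q 0)" using lower0[of t p] pt by simp
    then have "min (-2) (INF q. \<phi> q 0) \<le> \<phi> p t" unfolding infeq by (simp add: min_def max_def split: if_splits)
    then show "min (-2) (INF q. ca_curv x y q 0) \<le> ca_curv x y p t" unfolding \<phi>_def .
  qed
qed

end
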